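(* Let $a,b\ge0$, $c>0$ with $b<c^2+ac$ and $d:=a^2/4+b>0$, and let $y$ be the solution of the scalar initial value problem $y'=y^2+ay-b$, $y(T)=c$. Then for $t\in(-\infty,T]$, $$y(t)\ge\frac{1}{T-t+\frac{1}{c+a/2}}-\frac{a}{2}.$$ *)

theory Defs
  imports Complex_Main
begin

end

theory Submission
  imports Defs "HOL-Analysis.Analysis"
begin

theorem corollaryA2:
  fixes a b c T :: real and y :: "real \<Rightarrow> real"
  assumes "a \<ge> 0" and "b \<ge> 0" and "c > 0"
    and "b < c^2 + a * c"
    and "a^2 / 4 + b > 0"
    and "\<And>t. t \<le> T \<Longrightarrow>
           (y has_real_derivative ((y t)^2 + a * y t - b)) (at t within {..T})"
    and "y T = c"
  shows "\<forall>t \<le> T. y t \<ge> 1 / (T - t + 1 / (c + a / 2)) - a / 2"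
proof -
  define d where "d = a^2/4 + b"
  define c0 where "c0 = c + a/2"
  define z where "z = (\<lambda>t. y t + a/2)"
  define w where "w = (\<lambda>t. 1 / (T - t + 1/c0))"
  have c0: "c0 > 0" using assms(1,3) by (simp add: c0_def)
  have d0: "d \<ge> 0" using assms(1,2) by (simp add: d_def)
  have zT: "z T = c0" using assms(7) by (simp add: z_def c0_def)
  have zder: "(z has_real_derivative ((z t)^2 - d)) (at t within {..T})" if "t \<le> T" for t
  proof -
    have "(z has_real_derivative ((y t)^2 + a * y t - b)) (at t within {..T})"
      unfolding z_def using assms(6)[OF that] by (auto intro!: derivative_eq_intros)
    moreover have "(y t)^2 + a * y t - b = (z t)^2 - d"
      by (simp add: z_def d_def power2_eq_square algebra_simps)
    ultimately show ?thesis by simp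
  qed
  have zcont: "continuous_on {..T} z"
    by (rule DERIV_continuous_on[OF zder]) auto
  have zat: "(z has_real_derivative ((z t)^2 - d)) (at t)" if "t < T" for t
  proof -
    have "(z has_real_derivative ((z t)^2 - d)) (at t within {..<T})"
      using zder[of t] that by (auto intro: has_field_derivative_subset)
    thus ?thesis using at_within_open[of t "{..<T}"] that by simp
  qed
  have wpos: "T - x + 1/c0 > 0" if "x \<le> T" for x using that c0
    by (smt (verit) divide_pos_pos zero_less_one)
  have P: "z x \<ge> w x" if x: "x \<le> T" and pos: "\<forall>r\<in>{x..T}. z r > 0" for x
  proof -
    define F where "F = (\<lambda>r. 1 / z r + r)"
    have "F x \<le> F T"
    proof (rule DERIV_nonneg_imp_increasing_open[OF x])
      fix r assume r: "x < r" "r < T"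
      have zr: "z r > 0" using pos r by auto
      have "(F has_real_derivative (- ((z r)^2 - d) / (z r)^2 + 1)) (at r)"
        unfolding F_def using zat[OF r(2)] zr
        by (auto intro!: derivative_eq_intros simp: power2_eq_square)
      moreover have "- ((z r)^2 - d) / (z r)^2 + 1 = d / (z r)^2"
        using zr by (simp add: field_simps)
      moreover have "d / (z r)^2 \<ge> 0" using d0 by simp
      ultimately show "\<exists>y. (F has_real_derivative y) (at r) \<and> 0 \<le> y" by metis
    next
      have "continuous_on {x..T} z" using continuous_on_subset[OF zcont] by auto
      thus "continuous_on {x..T} F"
        unfolding F_def using pos by (auto intro!: continuous_intros)
    qed
    hence "1 / z x \<le> T - x + 1/c0" using zT by (simp add: F_def)
    moreover have "z x > 0" using pos x by auto
    ultimately have "1 / (T - x + 1/c0) \<le> 1 / (1 / z x)"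
      using wpos[OF x] by (intro divide_left_mono) auto
    thus ?thesis unfolding w_def using \<open>z x > 0\<close> by simp
  qed
  have main: "z t \<ge> w t" if t: "t \<le> T" for t
  proof (rule ccontr)
    assume nt: "\<not> z t \<ge> w t"
    define S where "S = {t..T} \<inter> z -` {..0}"
    have "S \<noteq> {}"
    proof
      assume "S = {}"
      hence "\<forall>r\<in>{t..T}. z r > 0" unfolding S_def by force
      thus False using P[OF t] nt by auto
    qed
    have "closed S" unfolding S_def
      by (rule continuous_closed_preimage) (auto intro: continuous_on_subset[OF zcont])
    hence "compact S" unfolding S_def using compact_Int_closed[OF compact_Icc[of t T]] by (metis Int_assoc Int_absorb)
    then obtain s where s: "s \<in> S" "\<forall>x\<in>S. x \<le> s"
      using compact_attains_sup[OF _ \<open>S \<noteq> {}\<close>] by auto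
    have sT: "s \<le> T" and zs: "z s \<le> 0" and ts: "t \<le> s" using s(1) by (auto simp: S_def)
    have sT': "s < T" using zs zT c0 sT by (cases "s = T") auto
    define m where "m = w s"
    have m: "m > 0" unfolding m_def w_def using wpos[OF sT] by simp
    have zge: "z x \<ge> m" if "s < x" "x \<le> T" for x
    proof -
      have "\<forall>r\<in>{x..T}. z r > 0"
      proof
        fix r assume r: "r \<in> {x..T}"
        show "z r > 0"
        proof (rule ccontr)
          assume "\<not> z r > 0"
          hence "r \<in> S" using r ts that by (auto simp: S_def)
          thus False using s(2) r that by auto
        qed
      qed
      hence "z x \<ge> w x" using P that by auto
      moreover have "w x \<ge> w s" unfolding w_def
        using wpos[OF sT] wpos[OF that(2)] that
        by (intro divide_left_mono) (auto simp: mult_pos_pos)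
      ultimately show ?thesis by (simp add: m_def)
    qed
    have "continuous (at s within {..T}) z"
      using zcont sT by (simp add: continuous_on_eq_continuous_within)
    then obtain e where e: "e > 0" "\<forall>x\<in>{..T}. dist x s < e \<longrightarrow> dist (z x) (z s) < m"
      using m unfolding continuous_within_eps_delta by blast
    define x where "x = min T (s + e/2)"
    have "x \<in> {..T}" "dist x s < e" "s < x" using e sT' by (auto simp: x_def dist_real_def)
    hence "dist (z x) (z s) < m" using e by auto
    moreover have "z x \<ge> m" using zge \<open>s < x\<close> by (simp add: x_def)
    ultimately show False using zs by (simp add: dist_real_def)
  qed
  show ?thesis
  proof (intro allI impI)
    fix t assume "t \<le> T"
    from main[OF this] show "y t \<ge> 1 / (T - t + 1 / (c + a / 2)) - a / 2"
      by (simp add: z_def w_def c0_def)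
  qed
qed

end
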